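(* Let $U=\sum_{k=0}^rB_kE_2^k$ be a quasiautomorphic form of weight $w$ and depth $r$ for $\mathfrak{t}_\mu$. Then for every $0\le n\le r$ and all $z\in\mathbb{H}$, $$\frac{1}{z^{w-r}}\sum_{\ell=0}^{n}\binom{n}{\ell}g_\ell(Sz)\,(Sz)^{n-\ell}=(-1)^n\sum_{m=0}^{r-n}\binom{r-n}{m}g_m(z)\,z^{r-n-m},$$ where $Sz=-1/z$; equivalently $f_n(Sz)/z^{w-r}=(-1)^nf_{r-n}(z)$.
   Context: Let $\mu\ge 3$, $\varpi_\mu=2\cos(\pi/\mu)$, $T=\begin{pmatrix}1&\varpi_\mu\\0&1\end{pmatrix}$, $S=\begin{pmatrix}0&-1\\1&0\end{pmatrix}$, $\mathfrak{t}_\mu\subset\mathrm{SL}_2(\mathbb{R})$ generated by $T,S$. $\mathcal{A}_v(\mathfrak{t}_\mu)$ ($v$ even) is the space of holomorphic $f$ on $\mathbb{H}$ with $f(\gamma z)=(cz+d)^vf(z)$ for $\gamma\in\mathfrak{t}_\mu$, holomorphic at $i\infty$. $E_2$ is holomorphic on $\mathbb{H}$ with $E_2(Tz)=E_2(z)$, $E_2(Sz)/z^2=E_2(z)+C/z$, $C=\mathrm{lcm}(2,\mu)/(\pi i)$. A quasiautomorphic form of even weight $w$, depth $0\le r\le w/2$ is $U=\sum_{k=0}^rB_kE_2^k$ with $B_k\in\mathcal{A}_{w-2k}(\mathfrak{t}_\mu)$. With $\{r,\ell\}_m=\frac{(r-\ell)!(m+\ell)!}{r!\,m!}$, $g_\ell=C^\ell\sum_{m=0}^{r-\ell}\{r,\ell\}_mB_{\ell+m}E_2^m$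 for $0\le\ell\le r$, and $f_n(z)=\sum_{k=0}^n\binom{n}{k}g_k(z)z^{n-k}$ for $0\le n\le r$. *)

theory Defs
  imports "HOL-Complex_Analysis.Complex_Analysis"
begin

definition upper_half :: "complex set" where
  "upper_half = {z. Im z > 0}"

definition varpi :: "nat \<Rightarrow> real" where
  "varpi mu = 2 * cos (pi / real mu)"

text \<open>2x2 real matrices (a,b,c,d) = ((a,b),(c,d)).\<close>
type_synonym mat2 = "real \<times> real \<times> real \<times> real"

fun mmult :: "mat2 \<Rightarrow> mat2 \<Rightarrow> mat2" where
  "mmult (a, b, c, d) (a', b', c', d') =
     (a*a' + b*c', a*b' + b*d', c*a' + d*c', c*b' + d*d')"

definition T_mat :: "nat \<Rightarrow> mat2" where
  "T_mat mu = (1, varpi mu, 0, 1)"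

definition S_mat :: mat2 where
  "S_mat = (0, -1, 1, 0)"

inductive_set hecke_group :: "nat \<Rightarrow> mat2 set" for mu :: nat where
  one: "(1, 0, 0, 1) \<in> hecke_group mu"
| T: "g \<in> hecke_group mu \<Longrightarrow> mmult (T_mat mu) g \<in> hecke_group mu"
| Tinv: "g \<in> hecke_group mu \<Longrightarrow> mmult (1, - varpi mu, 0, 1) g \<in> hecke_group mu"
| S: "g \<in> hecke_group mu \<Longrightarrow> mmult S_mat g \<in> hecke_group mu"
| Sinv: "g \<in> hecke_group mu \<Longrightarrow> mmult (0, 1, -1, 0) g \<in> hecke_group mu"

fun moebius :: "mat2 \<Rightarrow> complex \<Rightarrow> complex" where
  "moebius (a, b, c, d) z = (of_real a * z + of_real b) / (of_real c * z + of_real d)"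

fun jfactor :: "mat2 \<Rightarrow> complex \<Rightarrow> complex" where
  "jfactor (a, b, c, d) z = of_real c * z + of_real d"

text \<open>Holomorphy at i\<infinity> (for a function holomorphic on H and invariant under T):
  boundedness as Im z \<rightarrow> \<infinity>.\<close>
definition holo_at_infinity :: "(complex \<Rightarrow> complex) \<Rightarrow> bool" where
  "holo_at_infinity f \<longleftrightarrow> (\<exists>M y0. \<forall>z. Im z > y0 \<longrightarrow> norm (f z) \<le> M)"

definition automorphic_form :: "nat \<Rightarrow> nat \<Rightarrow> (complex \<Rightarrow> complex) \<Rightarrow> bool" where
  "automorphic_form mu v f \<longleftrightarrow>
     f holomorphic_on upper_half \<and>
     (\<forall>\<gamma>\<in>hecke_group mu. \<forall>z\<in>upper_half. f (moebius \<gamma> z) = jfactor \<gamma> z ^ v * f z) \<and>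
     holo_at_infinity f"

definition Cconst :: "nat \<Rightarrow> complex" where
  "Cconst mu = of_nat (lcm 2 mu) / (of_real pi * \<i>)"

definition is_E2 :: "nat \<Rightarrow> (complex \<Rightarrow> complex) \<Rightarrow> bool" where
  "is_E2 mu E \<longleftrightarrow>
     E holomorphic_on upper_half \<and>
     (\<forall>z\<in>upper_half. E (z + of_real (varpi mu)) = E z) \<and>
     (\<forall>z\<in>upper_half. E (-1 / z) / z^2 = E z + Cconst mu / z)"

text \<open>U = sum_{k=0}^r B_k E_2^k is quasiautomorphic of weight w and depth r.\<close>
definition quasiautomorphic :: "nat \<Rightarrow> nat \<Rightarrow> nat \<Rightarrow> (nat \<Rightarrow> complex \<Rightarrow> complex) \<Rightarrow> bool" where
  "quasiautomorphic mu w r B \<longleftrightarrow>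
     even w \<and> r \<le> w div 2 \<and> (\<forall>k\<le>r. automorphic_form mu (w - 2 * k) (B k))"

definition brk :: "nat \<Rightarrow> nat \<Rightarrow> nat \<Rightarrow> complex" where
  "brk r l m = of_nat (fact (r - l) * fact (m + l)) / of_nat (fact r * fact m)"

definition gfun :: "nat \<Rightarrow> (complex \<Rightarrow> complex) \<Rightarrow> (nat \<Rightarrow> complex \<Rightarrow> complex)
                    \<Rightarrow> nat \<Rightarrow> nat \<Rightarrow> complex \<Rightarrow> complex" where
  "gfun mu E B r l z = Cconst mu ^ l * (\<Sum>m = 0..r - l. brk r l m * B (l + m) z * E z ^ m)"

end

theory Submission
  imports Defs "HOL-Computational_Algebra.Polynomial"
begin

lemma higher_pderiv_monom:
  "(pderiv ^^ k) (monom a m) = monom (a * of_nat (\<Prod>i<k. m - i)) (m - k)"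
proof (induction k)
  case 0 then show ?case by simp
next
  case (Suc k)
  show ?case by (simp add: Suc pderiv_monom prod.lessThan_Suc mult_ac del: of_nat_prod)
qed

lemma expand_poly:
  fixes a :: complex
  shows "monom 1 N * [:a, 1:] ^ M = (\<Sum>j\<le>M. monom (of_nat (M choose j) * a ^ j) (N + M - j))"
proof -
  have "poly (monom 1 N * [:a, 1:] ^ M) x = poly (\<Sum>j\<le>M. monom (of_nat (M choose j) * a ^ j) (N + M - j)) x" for x
  proof -
    have "poly (monom 1 N * [:a, 1:] ^ M) x = x ^ N * (a + x) ^ M"
      by (simp add: poly_monom)
    also have "\<dots> = (\<Sum>j\<le>M. x ^ N * (of_nat (M choose j) * a ^ j * x ^ (M - j)))"
      by (simp add: binomial_ring sum_distrib_left)
    also have "\<dots> = (\<Sum>j\<le>M. of_nat (M choose j) * a ^ j * x ^ (N + M - j))"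
    proof (rule sum.cong)
      fix j assume "j \<in> {..M}"
      then have "N + M - j = N + (M - j)" by simp
      then show "x ^ N * (of_nat (M choose j) * a ^ j * x ^ (M - j)) = of_nat (M choose j) * a ^ j * x ^ (N + M - j)"
        by (simp add: power_add)
    qed simp
    finally show ?thesis by (simp add: poly_sum poly_monom)
  qed
  then show ?thesis using poly_eq_poly_eq_iff by blast
qed

lemma poly_higher_expand:
  fixes a y :: complex
  shows "poly ((pderiv ^^ k) (monom 1 N * [:a, 1:] ^ M)) y =
    (\<Sum>j\<le>M. of_nat (M choose j) * a ^ j * of_nat (\<Prod>i<k. N + M - j - i) * y ^ (N + M - j - k))"
  by (simp add: expand_poly higher_pderiv_sum higher_pderiv_monom poly_sum poly_monom)

lemma higher_pderiv_shift:
  fixes u :: complex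
  shows "(pderiv ^^ k) (pcompose p [:u, 1:]) = pcompose ((pderiv ^^ k) p) [:u, 1:]"
  by (induction k) (simp_all add: pderiv_pcompose pderiv_pCons)

lemma key_identity:
  fixes u E :: complex
  assumes "n \<le> r" "k \<le> r"
  shows "(\<Sum>l\<le>n. of_nat (n choose l) * (-u) ^ l * of_nat (\<Prod>i<k. r - l - i) * (E + u) ^ (r - l - k))
       = (\<Sum>m\<le>r - n. of_nat ((r - n) choose m) * u ^ m * of_nat (\<Prod>i<k. r - m - i) * E ^ (r - m - k))"
proof -
  define P0 where "P0 = monom 1 (r - n) * [:-u, 1:] ^ n"
  define P1 where "P1 = monom 1 n * [:u, 1:] ^ (r - n)"
  have comp: "pcompose P0 [:u, 1:] = P1"
  proof -
    have "poly (pcompose P0 [:u, 1:]) x = poly P1 x" for x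
      by (simp add: P0_def P1_def poly_pcompose poly_monom mult.commute)
    then show ?thesis using poly_eq_poly_eq_iff by blast
  qed
  have "poly ((pderiv ^^ k) P0) (E + u) = poly ((pderiv ^^ k) P1) E"
    by (simp add: comp[symmetric] higher_pderiv_shift poly_pcompose add.commute)
  moreover have "poly ((pderiv ^^ k) P0) (E + u) = (\<Sum>l\<le>n. of_nat (n choose l) * (-u) ^ l * of_nat (\<Prod>i<k. r - l - i) * (E + u) ^ (r - l - k))"
    using assms unfolding P0_def poly_higher_expand by simp
  moreover have "poly ((pderiv ^^ k) P1) E = (\<Sum>m\<le>r - n. of_nat ((r - n) choose m) * u ^ m * of_nat (\<Prod>i<k. r - m - i) * E ^ (r - m - k))"
    using assms unfolding P1_def poly_higher_expand by simp
  ultimately show ?thesis by simp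
qed

lemma fact_prod_nat:
  assumes "k \<le> m"
  shows "fact (m - k) * (\<Prod>i<k. m - i) = (fact m :: nat)"
  using assms
proof (induction k)
  case 0 then show ?case by simp
next
  case (Suc k)
  have "m - k = Suc (m - Suc k)" using Suc.prems by simp
  then have "fact (m - k) = (m - k) * (fact (m - Suc k) :: nat)" by simp
  then show ?case using Suc by (simp add: prod.lessThan_Suc mult_ac)
qed

lemma prod_as_fact:
  assumes "l \<le> p" "p \<le> r"
  shows "(of_nat (\<Prod>i<r - p. r - l - i) :: complex) = fact (r - l) / fact (p - l)"
proof -
  have "fact (r - l - (r - p)) * (\<Prod>i<r - p. r - l - i) = (fact (r - l) :: nat)"
    by (rule fact_prod_nat) (use assms in simp)
  moreover have "r - l - (r - p) = p - l" using assms by simp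
  ultimately have "fact (p - l) * (\<Prod>i<r - p. r - l - i) = (fact (r - l) :: nat)" by simp
  then have "(fact (p - l) :: complex) * of_nat (\<Prod>i<r - p. r - l - i) = fact (r - l)"
    by (metis of_nat_fact of_nat_mult)
  then show ?thesis by (simp add: field_simps)
qed

lemma prod_zero:
  assumes "p < l" "l \<le> r"
  shows "(\<Prod>i<r - p. r - l - i) = (0::nat)"
  using assms by (intro prod_zero) (auto intro!: bexI[where x="r - l"])


theorem mainTheorem8:
  fixes mu w r n :: nat and B :: "nat \<Rightarrow> complex \<Rightarrow> complex"
    and E2 :: "complex \<Rightarrow> complex" and z :: complex
  assumes "mu \<ge> 3"
    and "is_E2 mu E2"
    and "quasiautomorphic mu w r B"
    and "n \<le> r"
    and "z \<in> upper_half"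
  shows "(1 / z ^ (w - r)) *
           (\<Sum>l = 0..n. of_nat (n choose l) * gfun mu E2 B r l (-1 / z) * (-1 / z) ^ (n - l))
         = (-1) ^ n * (\<Sum>m = 0..r - n. of_nat ((r - n) choose m) * gfun mu E2 B r m z * z ^ (r - n - m))"
proof -
  have z0: "z \<noteq> 0" using assms(5) by (auto simp: upper_half_def)
  define C where "C = Cconst mu"
  define E where "E = E2 z"
  define u where "u = C / z"
  define X where "X = E + u"
  have wr: "2 * r \<le> w" using assms(3) by (auto simp: quasiautomorphic_def)
  have Sg: "S_mat \<in> hecke_group mu"
  proof -
    have "mmult S_mat (1, 0, 0, 1) \<in> hecke_group mu" by (rule hecke_group.S[OF hecke_group.one])
    then show ?thesis by (simp add: S_mat_def)
  qed
  have hB: "B k (-1 / z) = z ^ (w - 2 * k) * B k z" if "k \<le> r" for k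
  proof -
    have "automorphic_form mu (w - 2 * k) (B k)" using assms(3) that by (auto simp: quasiautomorphic_def)
    then have "B k (moebius S_mat z) = jfactor S_mat z ^ (w - 2 * k) * B k z"
      using Sg assms(5) by (auto simp: automorphic_form_def)
    then show ?thesis by (simp add: S_mat_def)
  qed
  have hE: "E2 (-1 / z) = z ^ 2 * X"
  proof -
    have "E2 (-1 / z) / z ^ 2 = E2 z + Cconst mu / z" using assms(2,5) by (auto simp: is_E2_def)
    then show ?thesis using z0 by (simp add: X_def u_def E_def C_def field_simps)
  qed
  define K where "K = (-1) ^ n * z ^ r / z ^ n"
  define F where "F l p = B p z * (fact p / fact r) * K *
      (of_nat (n choose l) * (-u) ^ l * of_nat (\<Prod>i<r - p. r - l - i) * X ^ (r - l - (r - p)))" for l p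
  define G where "G m p = B p z * (fact p / fact r) * K *
      (of_nat ((r - n) choose m) * u ^ m * of_nat (\<Prod>i<r - p. r - m - i) * E ^ (r - m - (r - p)))" for m p
  have L1: "(1 / z ^ (w - r)) * (of_nat (n choose l) * gfun mu E2 B r l (-1 / z) * (-1 / z) ^ (n - l))
      = (\<Sum>p\<le>r. F l p)" if "l \<le> n" for l
  proof -
    have lr: "l \<le> r" using that assms(4) by simp
    have "(\<Sum>p\<le>r. F l p) = (\<Sum>p\<in>{l..r}. F l p)"
    proof (rule sum.mono_neutral_right)
      show "\<forall>p\<in>{..r} - {l..r}. F l p = 0"
      proof
        fix p assume "p \<in> {..r} - {l..r}"
        then have "p < l" by auto
        then have "(\<Prod>i<r - p. r - l - i) = 0" using lr by (rule prod_zero)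
        then show "F l p = 0" by (simp add: F_def del: prod_zero_iff)
      qed
    qed auto
    also have "\<dots> = (\<Sum>m\<in>{0..r - l}. F l (m + l))"
      using sum.shift_bounds_cl_nat_ivl[of "F l" 0 l "r - l"] lr by simp
    also have "\<dots> = (\<Sum>m\<in>{0..r - l}. (1 / z ^ (w - r)) * (of_nat (n choose l) *
         (C ^ l * (brk r l m * B (l + m) (-1 / z) * E2 (-1 / z) ^ m)) * (-1 / z) ^ (n - l)))"
    proof (rule sum.cong)
      fix m assume "m \<in> {0..r - l}"
      then have mr: "l + m \<le> r" using lr by auto
      define b where "b = n - l"
      have b: "n = l + b" using that b_def by simp
      define c where "c = r - (l + m)"
      have c: "r = l + m + c" using mr c_def by simp
      define d where "d = w - 2 * r"
      have d: "w = 2 * r + d" using wr d_def by simp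
      have pf: "(of_nat (\<Prod>i<r - (m + l). r - l - i) :: complex) = fact (r - l) / fact (m + l - l)"
        by (rule prod_as_fact) (use mr in auto)
      have e1: "r - l - (r - (m + l)) = m" using mr by simp
      have e2: "w - 2 * (l + m) = 2 * c + d" using c d by simp
      have e3: "w - r = l + m + c + d" using c d by simp
      have e4: "n - l = b" using b by simp
      have e5: "r - l = m + c" using c by simp
      have zf: "z ^ (l + m + c) / (z ^ (l + b) * z ^ l) = z ^ (2 * c + d) * z ^ (2 * m) / (z ^ (l + m + c + d) * z ^ b)"
      proof -
        have "z ^ (l + m + c) * (z ^ (l + m + c + d) * z ^ b) = z ^ (2 * c + d) * z ^ (2 * m) * (z ^ (l + b) * z ^ l)"
          by (simp add: power_add[symmetric] mult_2 add_ac)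
        then show ?thesis using z0 by (simp add: divide_eq_eq eq_divide_eq)
      qed
      define A where "A = B (l + m) z * of_nat (n choose l) * C ^ l * (fact (m + c) * fact (m + l) / (fact r * fact m)) * X ^ m * (-1) ^ b"
      have sgn: "((-1::complex) ^ (l + b) * (-1) ^ l) = (-1) ^ b"
      proof -
        have "((-1::complex) ^ (l + b) * (-1) ^ l) = ((-1) ^ l * (-1) ^ l) * (-1) ^ b"
          by (simp add: power_add mult_ac)
        also have "(-1::complex) ^ l * (-1) ^ l = 1"
          by (simp add: power_mult_distrib[symmetric])
        finally show ?thesis by simp
      qed
      have lhs: "F l (m + l) = A * (z ^ (l + m + c) / (z ^ (l + b) * z ^ l))"
        unfolding F_def pf e1 unfolding K_def u_def A_def b c e5
        by (simp add: power_minus' power_divide power_add[of "-1::complex"] mult_ac sgn[unfolded power_add] add.commute)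
      have rhs: "(1 / z ^ (w - r)) * (of_nat (n choose l) *
         (C ^ l * (brk r l m * B (l + m) (-1 / z) * E2 (-1 / z) ^ m)) * (-1 / z) ^ (n - l))
         = A * (z ^ (2 * c + d) * z ^ (2 * m) / (z ^ (l + m + c + d) * z ^ b))"
        unfolding hB[OF mr] hE brk_def e2 e3 e4 A_def e5
        by (simp add: power_minus' power_divide power_mult_distrib power_mult[symmetric] mult_ac add.commute)
      show "F l (m + l) = (1 / z ^ (w - r)) * (of_nat (n choose l) *
         (C ^ l * (brk r l m * B (l + m) (-1 / z) * E2 (-1 / z) ^ m)) * (-1 / z) ^ (n - l))"
        unfolding lhs rhs zf ..
    qed simp
    also have "\<dots> = (1 / z ^ (w - r)) * (of_nat (n choose l) * gfun mu E2 B r l (-1 / z) * (-1 / z) ^ (n - l))"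
      by (simp add: gfun_def C_def sum_distrib_left sum_distrib_right mult.assoc)
    finally show ?thesis by simp
  qed
  have L2: "(-1) ^ n * (of_nat ((r - n) choose m) * gfun mu E2 B r m z * z ^ (r - n - m))
      = (\<Sum>p\<le>r. G m p)" if "m \<le> r - n" for m
  proof -
    have mr0: "m \<le> r" using that by simp
    have "(\<Sum>p\<le>r. G m p) = (\<Sum>p\<in>{m..r}. G m p)"
    proof (rule sum.mono_neutral_right)
      show "\<forall>p\<in>{..r} - {m..r}. G m p = 0"
      proof
        fix p assume "p \<in> {..r} - {m..r}"
        then have "p < m" by auto
        then have "(\<Prod>i<r - p. r - m - i) = 0" using mr0 by (rule prod_zero)
        then show "G m p = 0" by (simp add: G_def del: prod_zero_iff)
      qed
    qed auto
    also have "\<dots> = (\<Sum>j\<in>{0..r - m}. G m (j + m))"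
      using sum.shift_bounds_cl_nat_ivl[of "G m" 0 m "r - m"] mr0 by simp
    also have "\<dots> = (\<Sum>j\<in>{0..r - m}. (-1) ^ n * (of_nat ((r - n) choose m) *
         (C ^ m * (brk r m j * B (m + j) z * E2 z ^ j)) * z ^ (r - n - m)))"
    proof (rule sum.cong)
      fix j assume "j \<in> {0..r - m}"
      then have jr: "m + j \<le> r" using mr0 by auto
      have pf: "(of_nat (\<Prod>i<r - (j + m). r - m - i) :: complex) = fact (r - m) / fact (j + m - m)"
        by (rule prod_as_fact) (use jr in auto)
      have e1: "r - m - (r - (j + m)) = j" using jr by simp
      have zf: "z ^ r / z ^ n / z ^ m = z ^ (r - n - m)"
      proof -
        have "r = (r - n - m) + n + m" using that assms(4) by simp
        then have "z ^ r = z ^ (r - n - m) * z ^ n * z ^ m" by (metis power_add)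
        then show ?thesis using z0 by simp
      qed
      have "G m (j + m) = B (m + j) z * (fact (j + m) / fact r) * (-1) ^ n *
          (of_nat ((r - n) choose m) * C ^ m * (fact (r - m) / fact j) * E ^ j) * (z ^ r / z ^ n / z ^ m)"
        unfolding G_def pf e1 K_def u_def by (simp add: power_divide mult_ac add.commute)
      also have "\<dots> = (-1) ^ n * (of_nat ((r - n) choose m) *
         (C ^ m * (brk r m j * B (m + j) z * E2 z ^ j)) * z ^ (r - n - m))"
        unfolding zf brk_def E_def by (simp add: mult_ac add.commute)
      finally show "G m (j + m) = (-1) ^ n * (of_nat ((r - n) choose m) *
         (C ^ m * (brk r m j * B (m + j) z * E2 z ^ j)) * z ^ (r - n - m))" .
    qed simp
    also have "\<dots> = (-1) ^ n * (of_nat ((r - n) choose m) * gfun mu E2 B r m z * z ^ (r - n - m))"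
      by (simp add: gfun_def C_def sum_distrib_left sum_distrib_right mult.assoc)
    finally show ?thesis by simp
  qed
  have P: "(\<Sum>l\<le>n. F l p) = (\<Sum>m\<le>r - n. G m p)" if "p \<le> r" for p
  proof -
    have "(\<Sum>l\<le>n. of_nat (n choose l) * (-u) ^ l * of_nat (\<Prod>i<r - p. r - l - i) * (E + u) ^ (r - l - (r - p)))
       = (\<Sum>m\<le>r - n. of_nat ((r - n) choose m) * u ^ m * of_nat (\<Prod>i<r - p. r - m - i) * E ^ (r - m - (r - p)))"
      by (rule key_identity) (use assms(4) in auto)
    moreover have "(\<Sum>l\<le>n. F l p) = (B p z * (fact p / fact r) * K) *
      (\<Sum>l\<le>n. of_nat (n choose l) * (-u) ^ l * of_nat (\<Prod>i<r - p. r - l - i) * (E + u) ^ (r - l - (r - p)))"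
      by (simp only: F_def X_def sum_distrib_left)
    moreover have "(\<Sum>m\<le>r - n. G m p) = (B p z * (fact p / fact r) * K) *
      (\<Sum>m\<le>r - n. of_nat ((r - n) choose m) * u ^ m * of_nat (\<Prod>i<r - p. r - m - i) * E ^ (r - m - (r - p)))"
      by (simp only: G_def sum_distrib_left)
    ultimately show ?thesis by simp
  qed
  have "(1 / z ^ (w - r)) *
           (\<Sum>l = 0..n. of_nat (n choose l) * gfun mu E2 B r l (-1 / z) * (-1 / z) ^ (n - l))
      = (\<Sum>l\<le>n. (1 / z ^ (w - r)) * (of_nat (n choose l) * gfun mu E2 B r l (-1 / z) * (-1 / z) ^ (n - l)))"
    by (simp add: atLeast0AtMost sum_distrib_left)
  also have "\<dots> = (\<Sum>l\<le>n. \<Sum>p\<le>r. F l p)" using L1 by simp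
  also have "\<dots> = (\<Sum>p\<le>r. \<Sum>l\<le>n. F l p)" by (rule sum.swap)
  also have "\<dots> = (\<Sum>p\<le>r. \<Sum>m\<le>r - n. G m p)" using P by simp
  also have "\<dots> = (\<Sum>m\<le>r - n. \<Sum>p\<le>r. G m p)" by (rule sum.swap)
  also have "\<dots> = (\<Sum>m\<le>r - n. (-1) ^ n * (of_nat ((r - n) choose m) * gfun mu E2 B r m z * z ^ (r - n - m)))"
    using L2 by simp
  also have "\<dots> = (-1) ^ n * (\<Sum>m = 0..r - n. of_nat ((r - n) choose m) * gfun mu E2 B r m z * z ^ (r - n - m))"
    by (simp add: atLeast0AtMost sum_distrib_left)
  finally show ?thesis .
qed

end
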